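(* Let $P$ be the transition matrix of an irreducible classical Markov chain on a countable state space $\Lambda$, and consider the associated OQRW with $\mathcal H=\mathbb C$, $\mathcal K=\ell^2(\Lambda)$, $B^i_j=\sqrt{P(j,i)}U^i_j$ ($|U^i_j|=1$). Then for every faithful initial probability measure $\rho^{(0)}$ (i.e. $\rho^{(0)}_i>0$ for all $i\in\Lambda$), the QMC $(\rho^{(0)},(\mathcal E^{(n)})_{n\ge0})$ associated with this OQRW is irreducible.
   Context: A stochastic matrix $P$ has nonnegative entries with $\sum_jP(i,j)=1$. $i\to j$ means $P^n(i,j)>0$ for some $n\in\mathbb N$; the chain is irreducible if $i\to j$ and $j\to i$ for all $i,j\in\Lambda$. States of $\mathcal B$ are probability measures $\rho=(\rho_i)$ identified with $\sum_i\rho_i|i\rangle\langle i|$. The OQRW: $\mathcal M(\rho)=\sum_i(\sum_jB^i_j\rho_j\overline{B^i_j})|i\rangle\langle i|$, $\rho^{(n)}=\mathcal M^n(\rho^{(0)})$, $\Lambda(\rho^{(n)})=\{i:\rho^{(n)}_i\ne0\}$, $M^i_j=B^i_j|i\rangle\langle j|$. $\mathcal B$ is the commutative algebra of bounded diagonal operators on $\ell^2(\Lambda)$, $\mathcal A=\bigotimes_{k\in\mathbb Z_+}\mathcal B$. Transition expectations: $\mathcal E^{(n)}(x\otimes y)=\sum_{j\in\Lambda(\rho^{(n)})}\sum_i\frac{\mathrm{Tr}((\rho^{(n)}_j|j\rangle\langle j|)x)}{\rho^{(n)}_j}{M^i_j}^*yM^i_j$. $\bar b(n)$ is the strong limit as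 $k\to\infty$ of $\mathcal E^{(n)}(I\otimes\cdots\otimes\mathcal E^{(n+k)}(I\otimes I))$; $E_{0]}(a_0\otimes\cdots\otimes a_n\otimes I\otimes\cdots)=\mathcal E^{(0)}(a_0\otimes\cdots\otimes\mathcal E^{(n)}(a_n\otimes\bar b(n+1)))$, extended to $\mathcal A$ by limits. The QMC is reducible if there exist a projection $p\in\mathcal B$, $p\ne0,I$, and $n_0$ with $E_{0]}(p_{[n_0}ap_{[n_0})=E_{0]}(a)$ for all $a\in\mathcal A$, where $p_{[n}=I\otimes\cdots\otimes I\otimes p\otimes p\otimes\cdots$ ($p$ from the $n$-th position on); otherwise irreducible. *)

theory Defs
  imports "HOL-Analysis.Analysis"
begin

definition stochastic :: "('a \<Rightarrow> 'a \<Rightarrow> real) \<Rightarrow> bool" where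
  "stochastic P \<longleftrightarrow> (\<forall>i j. 0 \<le> P i j) \<and> (\<forall>i. (P i has_sum 1) UNIV)"

fun mpow :: "('a \<Rightarrow> 'a \<Rightarrow> real) \<Rightarrow> nat \<Rightarrow> 'a \<Rightarrow> 'a \<Rightarrow> real" where
  "mpow P 0 i j = (if i = j then 1 else 0)"
| "mpow P (Suc n) i j = (\<Sum>\<^sub>\<infinity>k. mpow P n i k * P k j)"

definition leads_to :: "('a \<Rightarrow> 'a \<Rightarrow> real) \<Rightarrow> 'a \<Rightarrow> 'a \<Rightarrow> bool" where
  "leads_to P i j \<longleftrightarrow> (\<exists>n. mpow P n i j > 0)"

definition irreducible_chain :: "('a \<Rightarrow> 'a \<Rightarrow> real) \<Rightarrow> bool" where
  "irreducible_chain P \<longleftrightarrow> (\<forall>i j. leads_to P i j \<and> leads_to P j i)"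

definition prob_measure :: "('a \<Rightarrow> real) \<Rightarrow> bool" where
  "prob_measure r \<longleftrightarrow> (\<forall>i. 0 \<le> r i) \<and> (r has_sum 1) UNIV"

text \<open>An element of the commutative algebra B of bounded diagonal operators on
  l2(Lambda) is represented by its diagonal, a bounded function Lambda -> complex.\<close>

definition diag_bdd :: "('a \<Rightarrow> complex) \<Rightarrow> bool" where
  "diag_bdd x \<longleftrightarrow> (\<exists>C. \<forall>a. cmod (x a) \<le> C)"

definition is_projection :: "('a \<Rightarrow> complex) \<Rightarrow> bool" where
  "is_projection p \<longleftrightarrow> (\<forall>a. cnj (p a) = p a \<and> p a * p a = p a)"

definition strong_conv :: "(nat \<Rightarrow> 'a \<Rightarrow> complex) \<Rightarrow> ('a \<Rightarrow> complex) \<Rightarrow> bool" where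
  "strong_conv Ds D \<longleftrightarrow>
     (\<forall>v. (\<lambda>a. (cmod (v a))\<^sup>2) summable_on UNIV \<longrightarrow>
        (\<forall>\<^sub>F k in sequentially. (\<lambda>a. (cmod ((Ds k a - D a) * v a))\<^sup>2) summable_on UNIV) \<and>
        ((\<lambda>k. \<Sum>\<^sub>\<infinity>a. (cmod ((Ds k a - D a) * v a))\<^sup>2) \<longlonglongrightarrow> 0))"

definition strong_lim :: "(nat \<Rightarrow> 'a \<Rightarrow> complex) \<Rightarrow> ('a \<Rightarrow> complex)" where
  "strong_lim Ds = (THE D. strong_conv Ds D)"

text \<open>\<open>Bm i j\<close> is the coefficient B^i_j (an operator on H = C, i.e. a complex number).
  States of B (diagonal density operators) are represented by their diagonal.\<close>

definition oqrw :: "('a \<Rightarrow> 'a \<Rightarrow> complex) \<Rightarrow> ('a \<Rightarrow> complex) \<Rightarrow> ('a \<Rightarrow> complex)" where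
  "oqrw Bm r i = (\<Sum>\<^sub>\<infinity>j. Bm i j * r j * cnj (Bm i j))"

fun rho_seq :: "('a \<Rightarrow> 'a \<Rightarrow> complex) \<Rightarrow> ('a \<Rightarrow> real) \<Rightarrow> nat \<Rightarrow> 'a \<Rightarrow> complex" where
  "rho_seq Bm rho0 0 = (\<lambda>i. complex_of_real (rho0 i))"
| "rho_seq Bm rho0 (Suc n) = oqrw Bm (rho_seq Bm rho0 n)"

text \<open>Transition expectation E^(n)(x (x) y), a diagonal operator:
  the sum over j in Lambda(rho^(n)) of Tr((rho_j |j><j|) x)/rho_j * sum_i (M^i_j)^* y M^i_j,
  where (M^i_j)^* y M^i_j = cnj(B^i_j) y_i B^i_j |j><j|.\<close>
definition TE :: "('a \<Rightarrow> 'a \<Rightarrow> complex) \<Rightarrow> ('a \<Rightarrow> real) \<Rightarrow> nat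
                   \<Rightarrow> ('a \<Rightarrow> complex) \<Rightarrow> ('a \<Rightarrow> complex) \<Rightarrow> ('a \<Rightarrow> complex)" where
  "TE Bm rho0 n x y j =
     (if rho_seq Bm rho0 n j \<noteq> 0
      then (rho_seq Bm rho0 n j * x j) / rho_seq Bm rho0 n j *
           (\<Sum>\<^sub>\<infinity>i. cnj (Bm i j) * y i * Bm i j)
      else 0)"

text \<open>\<open>chainE Bm rho0 n [a_n,...,a_m] y\<close> = E^(n)(a_n (x) E^(n+1)(... E^(m)(a_m (x) y))).\<close>
fun chainE :: "('a \<Rightarrow> 'a \<Rightarrow> complex) \<Rightarrow> ('a \<Rightarrow> real) \<Rightarrow> nat
                 \<Rightarrow> ('a \<Rightarrow> complex) list \<Rightarrow> ('a \<Rightarrow> complex) \<Rightarrow> ('a \<Rightarrow> complex)" where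
  "chainE Bm rho0 n [] y = y"
| "chainE Bm rho0 n (a # as) y = TE Bm rho0 n a (chainE Bm rho0 (Suc n) as y)"

definition bbar :: "('a \<Rightarrow> 'a \<Rightarrow> complex) \<Rightarrow> ('a \<Rightarrow> real) \<Rightarrow> nat \<Rightarrow> ('a \<Rightarrow> complex)" where
  "bbar Bm rho0 n = strong_lim (\<lambda>k. chainE Bm rho0 n (replicate (Suc k) (\<lambda>_. 1)) (\<lambda>_. 1))"

text \<open>E_{0]} on local elementary tensors a_0 (x) ... (x) a_n (x) I (x) I ... (given as a list).\<close>
definition E0loc :: "('a \<Rightarrow> 'a \<Rightarrow> complex) \<Rightarrow> ('a \<Rightarrow> real) \<Rightarrow> ('a \<Rightarrow> complex) list \<Rightarrow> ('a \<Rightarrow> complex)" where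
  "E0loc Bm rho0 as = chainE Bm rho0 0 as (bbar Bm rho0 (length as))"

text \<open>Extension of E_{0]} by (strong) limits to infinite elementary tensors
  f 0 (x) f 1 (x) f 2 (x) ...\<close>
definition E0 :: "('a \<Rightarrow> 'a \<Rightarrow> complex) \<Rightarrow> ('a \<Rightarrow> real) \<Rightarrow> (nat \<Rightarrow> 'a \<Rightarrow> complex) \<Rightarrow> ('a \<Rightarrow> complex)" where
  "E0 Bm rho0 f = strong_lim (\<lambda>N. E0loc Bm rho0 (map f [0..<N]))"

definition local_elem :: "(nat \<Rightarrow> 'a \<Rightarrow> complex) \<Rightarrow> bool" where
  "local_elem f \<longleftrightarrow> (\<forall>k. diag_bdd (f k)) \<and> (\<exists>m. \<forall>k\<ge>m. f k = (\<lambda>_. 1))"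

text \<open>p_[n0 a p_[n0 for an elementary tensor a (componentwise product of diagonals).\<close>
definition compress :: "('a \<Rightarrow> complex) \<Rightarrow> nat \<Rightarrow> (nat \<Rightarrow> 'a \<Rightarrow> complex) \<Rightarrow> (nat \<Rightarrow> 'a \<Rightarrow> complex)" where
  "compress p n0 f = (\<lambda>k. if n0 \<le> k then (\<lambda>a. p a * f k a * p a) else f k)"

definition QMC_reducible :: "('a \<Rightarrow> 'a \<Rightarrow> complex) \<Rightarrow> ('a \<Rightarrow> real) \<Rightarrow> bool" where
  "QMC_reducible Bm rho0 \<longleftrightarrow>
     (\<exists>p n0. diag_bdd p \<and> is_projection p \<and> p \<noteq> (\<lambda>_. 0) \<and> p \<noteq> (\<lambda>_. 1) \<and>
        (\<forall>f. local_elem f \<longrightarrow> E0 Bm rho0 (compress p n0 f) = E0 Bm rho0 f))"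

definition QMC_irreducible :: "('a \<Rightarrow> 'a \<Rightarrow> complex) \<Rightarrow> ('a \<Rightarrow> real) \<Rightarrow> bool" where
  "QMC_irreducible Bm rho0 \<longleftrightarrow> \<not> QMC_reducible Bm rho0"

end

theory Submission
  imports Defs
begin

lemma single_fun_infsum:
  fixes f :: "'a \<Rightarrow> 'b::{comm_monoid_add, t2_space}"
  assumes "\<And>b. b \<noteq> a \<Longrightarrow> f b = 0"
  shows "infsum f UNIV = f a" "f summable_on UNIV"
proof -
  have "infsum f UNIV = infsum f {a}"
    by (rule infsum_cong_neutral) (use assms in auto)
  then show "infsum f UNIV = f a" by simp
  have "f summable_on UNIV \<longleftrightarrow> f summable_on {a}"
    by (rule summable_on_cong_neutral) (use assms in auto)
  then show "f summable_on UNIV" by simp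
qed

lemma strong_conv_unique:
  assumes "strong_conv Ds D" "strong_conv Ds D'"
  shows "D = D'"
proof
  fix a
  define v :: "'a \<Rightarrow> complex" where "v = (\<lambda>b. if b = a then 1 else 0)"
  have vs: "(\<lambda>b. (cmod (v b))\<^sup>2) summable_on UNIV"
    by (rule single_fun_infsum(2)[where a=a]) (simp add: v_def)
  have lim: "(\<lambda>k. Ds k a) \<longlonglongrightarrow> E a" if "strong_conv Ds E" for E
  proof -
    have "(\<lambda>k. \<Sum>\<^sub>\<infinity>b. (cmod ((Ds k b - E b) * v b))\<^sup>2) \<longlonglongrightarrow> 0"
      using that vs unfolding strong_conv_def by blast
    moreover have "(\<Sum>\<^sub>\<infinity>b. (cmod ((Ds k b - E b) * v b))\<^sup>2) = (cmod (Ds k a - E a))\<^sup>2" for k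
      by (subst single_fun_infsum(1)[where a=a]) (auto simp: v_def)
    ultimately have "(\<lambda>k. (cmod (Ds k a - E a))\<^sup>2) \<longlonglongrightarrow> 0" by simp
    then have "(\<lambda>k. sqrt ((cmod (Ds k a - E a))\<^sup>2)) \<longlonglongrightarrow> sqrt 0"
      by (rule tendsto_real_sqrt)
    then have "(\<lambda>k. norm (Ds k a - E a)) \<longlonglongrightarrow> 0" by simp
    then show ?thesis
      using Lim_null tendsto_norm_zero_iff by blast
  qed
  show "D a = D' a" using lim[OF assms(1)] lim[OF assms(2)] LIMSEQ_unique by blast
qed

lemma strong_lim_eventually:
  assumes "\<forall>\<^sub>F k in sequentially. Ds k = D"
  shows "strong_lim Ds = D"
proof -
  have sc: "strong_conv Ds D"
    unfolding strong_conv_def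
  proof (intro allI impI conjI)
    fix v :: "'a \<Rightarrow> complex"
    show "\<forall>\<^sub>F k in sequentially. (\<lambda>a. (cmod ((Ds k a - D a) * v a))\<^sup>2) summable_on UNIV"
      using assms by eventually_elim simp
    have "\<forall>\<^sub>F k in sequentially. (\<Sum>\<^sub>\<infinity>a. (cmod ((Ds k a - D a) * v a))\<^sup>2) = 0"
      using assms by eventually_elim simp
    then show "(\<lambda>k. \<Sum>\<^sub>\<infinity>a. (cmod ((Ds k a - D a) * v a))\<^sup>2) \<longlonglongrightarrow> 0"
      by (rule tendsto_eventually)
  qed
  show ?thesis unfolding strong_lim_def
    by (metis sc strong_conv_unique the_equality)
qed

lemma infsum_of_real_complex:
  fixes f :: "'a \<Rightarrow> real"
  shows "(\<Sum>\<^sub>\<infinity>x. complex_of_real (f x)) = complex_of_real (\<Sum>\<^sub>\<infinity>x. f x)"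
proof (cases "f summable_on UNIV")
  case True
  then show ?thesis
    by (metis has_sum_infsum has_sum_of_real infsumI)
next
  case False
  have "\<not> (\<lambda>x. complex_of_real (f x)) summable_on UNIV"
    using False summable_on_Re by fastforce
  then show ?thesis using False by (simp add: infsum_not_exists)
qed


definition G :: "('a \<Rightarrow> 'a \<Rightarrow> real) \<Rightarrow> ('a \<Rightarrow> real) \<Rightarrow> 'a \<Rightarrow> real" where
  "G P y j = (\<Sum>\<^sub>\<infinity>i. P j i * y i)"

fun Qit :: "('a \<Rightarrow> 'a \<Rightarrow> real) \<Rightarrow> nat \<Rightarrow> ('a \<Rightarrow> real) \<Rightarrow> 'a \<Rightarrow> real" where
  "Qit P 0 y = y"
| "Qit P (Suc n) y = G P (Qit P n y)"

definition Gc :: "('a \<Rightarrow> 'a \<Rightarrow> real) \<Rightarrow> ('a \<Rightarrow> complex) \<Rightarrow> 'a \<Rightarrow> complex" where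
  "Gc P y j = (\<Sum>\<^sub>\<infinity>i. complex_of_real (P j i) * y i)"

lemma infsum_finite_sum:
  fixes f :: "'i \<Rightarrow> 'a \<Rightarrow> real"
  assumes "finite F" "\<And>i. i \<in> F \<Longrightarrow> f i summable_on A"
  shows "(\<lambda>x. \<Sum>i\<in>F. f i x) summable_on A \<and> (\<Sum>i\<in>F. infsum (f i) A) = infsum (\<lambda>x. \<Sum>i\<in>F. f i x) A"
  using assms
proof (induction F rule: finite_induct)
  case empty
  then show ?case by simp
next
  case (insert a F)
  then have ih: "(\<lambda>x. \<Sum>i\<in>F. f i x) summable_on A"
    "(\<Sum>i\<in>F. infsum (f i) A) = infsum (\<lambda>x. \<Sum>i\<in>F. f i x) A" by auto
  have fa: "f a summable_on A" using insert by auto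
  show ?case using insert(1,2) ih fa
    by (simp add: summable_on_add infsum_add)
qed

context
  fixes P :: "'a \<Rightarrow> 'a \<Rightarrow> real"
  assumes stoch: "stochastic P"
begin

lemma P_nonneg: "0 \<le> P i j" using stoch unfolding stochastic_def by auto

lemma P_hs: "(P i has_sum 1) UNIV" using stoch unfolding stochastic_def by auto

lemma P_le1: "P i j \<le> 1"
proof -
  have "sum (P i) {j} \<le> 1"
    by (rule finite_sum_le_has_sum[OF P_hs]) (auto simp: P_nonneg)
  then show ?thesis by simp
qed

lemma P_finsum_le1: "finite F \<Longrightarrow> sum (P i) F \<le> 1"
  by (rule finite_sum_le_has_sum[OF P_hs]) (auto simp: P_nonneg)

lemma Pmul_summable:
  assumes "\<And>i. 0 \<le> y i \<and> y i \<le> 1"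
  shows "(\<lambda>i. P j i * y i) summable_on UNIV"
proof (rule summable_on_comparison_test[of "P j"])
  show "P j summable_on UNIV" using P_hs has_sum_imp_summable by blast
  fix i
  show "P j i * y i \<le> P j i" using assms[of i] P_nonneg[of j i]
    by (simp add: mult_left_le)
  show "0 \<le> P j i * y i" using assms[of i] P_nonneg[of j i] by simp
qed

lemma G_bounds:
  assumes "\<And>i. 0 \<le> y i \<and> y i \<le> 1"
  shows "0 \<le> G P y j \<and> G P y j \<le> 1"
proof
  show "0 \<le> G P y j" unfolding G_def
    by (rule infsum_nonneg) (use assms P_nonneg in auto)
  have "G P y j \<le> infsum (P j) UNIV" unfolding G_def
  proof (rule infsum_mono)
    show "(\<lambda>i. P j i * y i) summable_on UNIV" by (rule Pmul_summable[OF assms])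
    show "P j summable_on UNIV" using P_hs has_sum_imp_summable by blast
    fix i show "P j i * y i \<le> P j i" using assms[of i] P_nonneg[of j i]
      by (simp add: mult_left_le)
  qed
  also have "\<dots> = 1" using P_hs infsumI by blast
  finally show "G P y j \<le> 1" .
qed

lemma G_pos:
  assumes "\<And>i. 0 \<le> y i \<and> y i \<le> 1" "P j i > 0" "y i > 0"
  shows "G P y j > 0"
proof -
  have "sum (\<lambda>i. P j i * y i) {i} \<le> G P y j" unfolding G_def
    by (rule finite_sum_le_has_sum[OF has_sum_infsum[OF Pmul_summable[OF assms(1)]]])
       (use assms(1) P_nonneg in auto)
  then show ?thesis using assms by simp (smt (verit) mult_pos_pos)
qed

lemma Qit_bounds:
  assumes "\<And>i. 0 \<le> y i \<and> y i \<le> 1"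
  shows "0 \<le> Qit P n y j \<and> Qit P n y j \<le> 1"
  using assms by (induction n arbitrary: j) (auto simp: G_bounds)

lemma Qit_pos:
  assumes "\<And>i. 0 \<le> y i \<and> y i \<le> 1" "y b > 0" "\<And>b. \<exists>c. P c b > 0"
  shows "\<exists>j. Qit P n y j > 0"
proof (induction n)
  case 0
  then show ?case using assms by auto
next
  case (Suc n)
  then obtain b' where b': "Qit P n y b' > 0" by blast
  obtain c where c: "P c b' > 0" using assms(3) by blast
  have "G P (Qit P n y) c > 0"
    using G_pos[of "Qit P n y" c b'] c b' Qit_bounds[of y n] assms(1) by blast
  then show ?case by auto
qed

lemma Gc_zero: "Gc P (\<lambda>_. 0) = (\<lambda>_. 0)"
  by (rule ext) (simp add: Gc_def)

lemma Gc_one: "Gc P (\<lambda>_. 1) = (\<lambda>_. 1)"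
proof
  fix j
  have "Gc P (\<lambda>_. 1) j = complex_of_real (\<Sum>\<^sub>\<infinity>i. P j i)"
    unfolding Gc_def by (simp add: infsum_of_real_complex)
  also have "(\<Sum>\<^sub>\<infinity>i. P j i) = 1" using P_hs infsumI by blast
  finally show "Gc P (\<lambda>_. 1) j = 1" by simp
qed

lemma Gc_real: "Gc P (\<lambda>a. complex_of_real (y a)) j = complex_of_real (G P y j)"
  unfolding Gc_def G_def
  by (simp add: infsum_of_real_complex[symmetric] flip: of_real_mult)

end


lemma BB_cnj:
  assumes "cmod u = 1" "0 \<le> q"
  shows "cnj (complex_of_real (sqrt q) * u) * y * (complex_of_real (sqrt q) * u) = complex_of_real q * y"
    and "(complex_of_real (sqrt q) * u) * y * cnj (complex_of_real (sqrt q) * u) = complex_of_real q * y"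
proof -
  let ?z = "complex_of_real (sqrt q) * u"
  have n: "cmod ?z = sqrt q" using assms by (simp add: norm_mult)
  have "?z * cnj ?z = complex_of_real q"
    using complex_norm_square[of ?z] n assms by simp
  then show "cnj ?z * y * ?z = complex_of_real q * y"
    and "?z * y * cnj ?z = complex_of_real q * y"
    by (simp_all add: algebra_simps)
qed

lemma chainE_append:
  "chainE Bm rho0 n (xs @ ys) y = chainE Bm rho0 n xs (chainE Bm rho0 (n + length xs) ys y)"
  by (induction xs arbitrary: n) auto

context
  fixes Bm :: "'a \<Rightarrow> 'a \<Rightarrow> complex" and rho0 :: "'a \<Rightarrow> real" and P :: "'a \<Rightarrow> 'a \<Rightarrow> real"
  assumes hTE: "\<And>n x y. TE Bm rho0 n x y = (\<lambda>j. x j * Gc P y j)"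
begin

lemma chainE_zero: "chainE Bm rho0 n xs (\<lambda>_. 0) = (\<lambda>_. 0)"
  by (induction xs arbitrary: n) (auto simp: hTE Gc_def)

lemma chainE_zero_elem:
  assumes "i < length xs" "xs ! i = (\<lambda>_. 0)"
  shows "chainE Bm rho0 n xs y = (\<lambda>_. 0)"
proof -
  have "xs = take i xs @ xs ! i # drop (Suc i) xs" using assms(1) by (simp add: id_take_nth_drop)
  then have "chainE Bm rho0 n xs y = chainE Bm rho0 n (take i xs) (chainE Bm rho0 (n + length (take i xs)) (xs ! i # drop (Suc i) xs) y)"
    by (metis chainE_append)
  also have "chainE Bm rho0 (n + length (take i xs)) (xs ! i # drop (Suc i) xs) y = (\<lambda>_. 0)"
    using assms(2) by (simp add: hTE)
  finally show ?thesis by (simp add: chainE_zero)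
qed

end


context
  fixes Bm :: "'a \<Rightarrow> 'a \<Rightarrow> complex" and rho0 :: "'a \<Rightarrow> real" and P :: "'a \<Rightarrow> 'a \<Rightarrow> real"
  assumes hTE: "\<And>n x y. TE Bm rho0 n x y = (\<lambda>j. x j * Gc P y j)"
    and stoch: "stochastic P"
begin

lemma chainE_ones: "chainE Bm rho0 n (replicate m (\<lambda>_. 1)) (\<lambda>_. 1) = (\<lambda>_. 1)"
  by (induction m arbitrary: n) (auto simp: hTE Gc_one[OF stoch])

lemma chainE_ones_real:
  "chainE Bm rho0 n (replicate m (\<lambda>_. 1)) (\<lambda>a. complex_of_real (y a)) = (\<lambda>a. complex_of_real (Qit P m y a))"
  by (induction m arbitrary: n) (auto simp: hTE Gc_real[OF stoch])

lemma bbar_one: "bbar Bm rho0 n = (\<lambda>_. 1)"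
  unfolding bbar_def by (rule strong_lim_eventually) (simp add: chainE_ones del: replicate_Suc)

end

lemma pred_exists:
  assumes "irreducible_chain P" "c \<noteq> b" "stochastic P"
  shows "\<exists>c. P c b > 0"
proof -
  obtain n where n: "mpow P n c b > 0" using assms unfolding irreducible_chain_def leads_to_def by blast
  then obtain m where m: "n = Suc m" using assms(2) by (cases n) auto
  show ?thesis
  proof (rule ccontr)
    assume "\<not> ?thesis"
    then have "\<And>k. P k b = 0" using assms(3) unfolding stochastic_def by (meson antisym not_le) 
    then show False using n m by simp
  qed
qed


lemma rho_inv:
  fixes P :: "'a \<Rightarrow> 'a \<Rightarrow> real"
  assumes stoch: "stochastic P" and U: "\<forall>i j. cmod (U i j) = 1"
    and pos0: "\<forall>i. rho0 i > 0" and sum0: "rho0 summable_on UNIV"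
    and pred: "\<And>b. \<exists>c. P c b > 0"
  shows "\<exists>r. rho_seq (\<lambda>i j. complex_of_real (sqrt (P j i)) * U i j) rho0 n = (\<lambda>i. complex_of_real (r i))
             \<and> (\<forall>i. 0 < r i) \<and> r summable_on UNIV"
proof (induction n)
  case 0
  then show ?case using pos0 sum0 by (intro exI[of _ rho0]) auto
next
  case (Suc n)
  then obtain r where r: "rho_seq (\<lambda>i j. complex_of_real (sqrt (P j i)) * U i j) rho0 n = (\<lambda>i. complex_of_real (r i))"
    "\<forall>i. 0 < r i" "r summable_on UNIV" by blast
  define r' where "r' i = (\<Sum>\<^sub>\<infinity>j. P j i * r j)" for i
  have sj: "(\<lambda>j. P j i * r j) summable_on UNIV" for i
  proof (rule summable_on_comparison_test[OF r(3)])
    fix j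
    show "P j i * r j \<le> r j" using P_le1[OF stoch, of j i] r(2) P_nonneg[OF stoch, of j i]
      by (simp add: mult_left_le_one_le less_imp_le)
    show "0 \<le> P j i * r j" using r(2) P_nonneg[OF stoch, of j i] by (simp add: less_imp_le)
  qed
  have eq: "rho_seq (\<lambda>i j. complex_of_real (sqrt (P j i)) * U i j) rho0 (Suc n) = (\<lambda>i. complex_of_real (r' i))"
  proof
    fix i
    have "rho_seq (\<lambda>i j. complex_of_real (sqrt (P j i)) * U i j) rho0 (Suc n) i
        = (\<Sum>\<^sub>\<infinity>j. complex_of_real (P j i) * complex_of_real (r j))"
    proof -
      have t: "complex_of_real (sqrt (P j i)) * U i j * complex_of_real (r j) * cnj (complex_of_real (sqrt (P j i)) * U i j)
             = complex_of_real (P j i) * complex_of_real (r j)" for j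
        using BB_cnj(2)[OF _ P_nonneg[OF stoch], of "U i j" j i "complex_of_real (r j)"] U by simp
      show ?thesis using r(1) by (simp only: rho_seq.simps oqrw_def t)
    qed
    also have "\<dots> = complex_of_real (r' i)"
      unfolding r'_def by (simp add: infsum_of_real_complex[symmetric] flip: of_real_mult)
    finally show "rho_seq (\<lambda>i j. complex_of_real (sqrt (P j i)) * U i j) rho0 (Suc n) i = complex_of_real (r' i)" .
  qed
  have ppos: "0 < r' i" for i
  proof -
    obtain c where c: "P c i > 0" using pred by blast
    have "sum (\<lambda>j. P j i * r j) {c} \<le> r' i" unfolding r'_def
      by (rule finite_sum_le_has_sum[OF has_sum_infsum[OF sj]])
         (use r(2) P_nonneg[OF stoch] in \<open>auto simp: less_imp_le\<close>)
    then show ?thesis using c r(2) by simp (smt (verit) mult_pos_pos)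
  qed
  have "r' summable_on UNIV"
  proof (rule nonneg_bdd_above_summable_on)
    show "0 \<le> r' x" for x using ppos[of x] by simp
    show "bdd_above (sum r' ` {F. F \<subseteq> UNIV \<and> finite F})"
    proof (rule bdd_aboveI)
      fix s assume "s \<in> sum r' ` {F. F \<subseteq> UNIV \<and> finite F}"
      then obtain F where F: "finite F" "s = sum r' F" by auto
      have sm: "(\<lambda>j. \<Sum>i\<in>F. P j i * r j) summable_on UNIV"
        using infsum_finite_sum[of F "\<lambda>i j. P j i * r j" UNIV] F sj unfolding r'_def by auto
      have "s = (\<Sum>\<^sub>\<infinity>j. \<Sum>i\<in>F. P j i * r j)"
        using infsum_finite_sum[of F "\<lambda>i j. P j i * r j" UNIV] F sj unfolding r'_def by auto
      also have "\<dots> \<le> infsum r UNIV"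
      proof (rule infsum_mono[OF sm r(3)])
        fix j
        have "(\<Sum>i\<in>F. P j i * r j) = sum (P j) F * r j" by (simp add: sum_distrib_right)
        also have "\<dots> \<le> r j" using P_finsum_le1[OF stoch F(1), of j] r(2)
          by (simp add: mult_left_le_one_le less_imp_le sum_nonneg P_nonneg[OF stoch])
        finally show "(\<Sum>i\<in>F. P j i * r j) \<le> r j" .
      qed
      finally show "s \<le> infsum r UNIV" .
    qed
  qed
  then show ?case using eq ppos by blast
qed


theorem mainTheorem14:
  fixes P :: "'a::countable \<Rightarrow> 'a \<Rightarrow> real"
    and U :: "'a \<Rightarrow> 'a \<Rightarrow> complex"
    and rho0 :: "'a \<Rightarrow> real"
  assumes "stochastic P"
    and "irreducible_chain P"
    and "\<forall>i j. cmod (U i j) = 1"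
    and "prob_measure rho0"
    and "\<forall>i. rho0 i > 0"
  shows "QMC_irreducible (\<lambda>i j. complex_of_real (sqrt (P j i)) * U i j) rho0"
proof -
  define Bm where "Bm = (\<lambda>i j. complex_of_real (sqrt (P j i)) * U i j)"
  note stoch = assms(1)
  show ?thesis unfolding QMC_irreducible_def QMC_reducible_def Bm_def[symmetric]
  proof
    assume "\<exists>p n0. diag_bdd p \<and> is_projection p \<and> p \<noteq> (\<lambda>_. 0) \<and> p \<noteq> (\<lambda>_. 1) \<and>
        (\<forall>f. local_elem f \<longrightarrow> E0 Bm rho0 (compress p n0 f) = E0 Bm rho0 f)"
    then obtain p n0 where proj: "is_projection p" and p0: "p \<noteq> (\<lambda>_. 0)" and p1: "p \<noteq> (\<lambda>_. 1)"
      and red: "\<And>f. local_elem f \<Longrightarrow> E0 Bm rho0 (compress p n0 f) = E0 Bm rho0 f" by blast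
    have p01: "p a = 0 \<or> p a = 1" for a
    proof -
      have "p a * p a = p a" using proj unfolding is_projection_def by blast
      then have "p a * (p a - 1) = 0" by (simp add: algebra_simps)
      then show ?thesis by simp
    qed
    obtain a1 where "p a1 \<noteq> 0" using p0 by auto
    then have a1: "p a1 = 1" using p01 by blast
    obtain a0 where "p a0 \<noteq> 1" using p1 by auto
    then have a0: "p a0 = 0" using p01 by blast
    have pred: "\<exists>c. P c b > 0" for b
    proof (cases "a0 = b")
      case True
      then have "a1 \<noteq> b" using a0 a1 by auto
      then show ?thesis using pred_exists[OF assms(2) _ stoch] by blast
    next
      case False
      then show ?thesis using pred_exists[OF assms(2) _ stoch] by blast
    qed
    have sum0: "rho0 summable_on UNIV" using assms(4) unfolding prob_measure_def
      using has_sum_imp_summable by blast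
    have rnz: "rho_seq Bm rho0 n j \<noteq> 0" for n j
    proof -
      obtain r where "rho_seq Bm rho0 n = (\<lambda>i. complex_of_real (r i))" "\<forall>i. 0 < r i"
        using rho_inv[OF stoch assms(3) assms(5) sum0 pred] unfolding Bm_def by blast
      then show ?thesis by (metis less_irrefl of_real_eq_0_iff)
    qed
    have hTE: "TE Bm rho0 n x y = (\<lambda>j. x j * Gc P y j)" for n x y
    proof
      fix j
      have t: "cnj (Bm i j) * y i * Bm i j = complex_of_real (P j i) * y i" for i
        unfolding Bm_def using BB_cnj(1)[OF _ P_nonneg[OF stoch], of "U i j" j i "y i"] assms(3) by simp
      show "TE Bm rho0 n x y j = x j * Gc P y j"
        using rnz[of n j] unfolding TE_def Gc_def t by simp
    qed
    define yq where "yq a = (if p a = 0 then 1 else (0::real))" for a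
    define f where "f = (\<lambda>k (a::'a). if k = n0 then 1 - p a else 1)"
    have loc: "local_elem f"
    proof -
      have "\<forall>k. diag_bdd (f k)" unfolding diag_bdd_def
      proof
        fix k show "\<exists>C. \<forall>a. cmod (f k a) \<le> C"
          by (rule exI[of _ 1]) (metis (no_types) f_def p01 cancel_comm_monoid_add_class.diff_cancel diff_zero norm_one norm_zero order.refl zero_le_one)
      qed
      moreover have "\<forall>k\<ge>Suc n0. f k = (\<lambda>_. 1)" by (auto simp: f_def)
      ultimately show ?thesis unfolding local_elem_def by blast
    qed
    have "E0 Bm rho0 (compress p n0 f) = (\<lambda>_. 0)"
      unfolding E0_def
    proof (rule strong_lim_eventually)
      show "\<forall>\<^sub>F N in sequentially. E0loc Bm rho0 (map (compress p n0 f) [0..<N]) = (\<lambda>_. 0)"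
        using eventually_ge_at_top[of "Suc n0"]
      proof eventually_elim
        case (elim N)
        have z: "map (compress p n0 f) [0..<N] ! n0 = (\<lambda>_. 0)"
        proof
          fix a
          show "(map (compress p n0 f) [0..<N] ! n0) a = 0"
            using elim p01[of a] by (auto simp: compress_def f_def)
        qed
        show ?case unfolding E0loc_def
          by (rule chainE_zero_elem[OF hTE _ z]) (use elim in auto)
      qed
    qed
    moreover have "E0 Bm rho0 f = (\<lambda>a. complex_of_real (Qit P n0 yq a))"
      unfolding E0_def
    proof (rule strong_lim_eventually)
      show "\<forall>\<^sub>F N in sequentially. E0loc Bm rho0 (map f [0..<N]) = (\<lambda>a. complex_of_real (Qit P n0 yq a))"
        using eventually_ge_at_top[of "Suc n0"]
      proof eventually_elim
        case (elim N)
        have ml: "map f [0..<N] = replicate n0 (\<lambda>_. 1) @ (\<lambda>a. 1 - p a) # replicate (N - Suc n0) (\<lambda>_. 1)"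
          by (rule nth_equalityI) (use elim in \<open>auto simp: nth_append f_def nth_Cons'\<close>)
        have pq: "(\<lambda>j. (1 - p j) * 1) = (\<lambda>a. complex_of_real (yq a))"
        proof
          fix a show "(1 - p a) * 1 = complex_of_real (yq a)" using p01[of a] by (auto simp: yq_def)
        qed
        have "E0loc Bm rho0 (map f [0..<N]) = chainE Bm rho0 0 (replicate n0 (\<lambda>_. 1))
                 (chainE Bm rho0 n0 ((\<lambda>a. 1 - p a) # replicate (N - Suc n0) (\<lambda>_. 1)) (\<lambda>_. 1))"
          unfolding E0loc_def bbar_one[OF hTE stoch] ml chainE_append by simp
        also have "chainE Bm rho0 n0 ((\<lambda>a. 1 - p a) # replicate (N - Suc n0) (\<lambda>_. 1)) (\<lambda>_. 1)
             = (\<lambda>a. complex_of_real (yq a))"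
          using pq by (simp add: chainE_ones[OF hTE stoch] hTE Gc_one[OF stoch])
        finally show ?case by (simp add: chainE_ones_real[OF hTE stoch])
      qed
    qed
    note E0s = this
    moreover have yb: "\<And>i. 0 \<le> yq i \<and> yq i \<le> 1" by (simp add: yq_def)
    moreover have "yq a0 > 0" using a0 by (simp add: yq_def)
    ultimately obtain j where "Qit P n0 yq j > 0"
      using Qit_pos[OF stoch, of yq a0 n0] pred by blast
    moreover have "(\<lambda>a. complex_of_real (Qit P n0 yq a)) = (\<lambda>_. 0)"
      using \<open>E0 Bm rho0 (compress p n0 f) = (\<lambda>_. 0)\<close> \<open>E0 Bm rho0 f = _\<close> red[OF loc] by simp
    ultimately show False by (metis less_irrefl of_real_eq_0_iff)
  qed
qed

end
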